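(* Let $n\ge k\ge d$ be positive integers and let $G\subseteq\mathbb{Z}[\mathbf{x}_n,\mathbf{y}_d]$ be the set consisting of $h_r(\mathbf{y}_d)$ for all $r>k-d$; $e_r(\mathbf{x}_n) - e_{r-1}(\mathbf{x}_n)h_1(\mathbf{y}_d)+\cdots+(-1)^r h_r(\mathbf{y}_d)$ for all $r>n-d$; and $x_i^d - x_i^{d-1}e_1(\mathbf{y}_d)+\cdots+(-1)^d e_d(\mathbf{y}_d)$ for $i=1,\dots,n$. Let $J_{n,k,d}\subseteq\mathbb{Z}[\mathbf{x}_n,\mathbf{y}_d]$ be the ideal generated by $G$. If $f\in J_{n,k,d}\cap\mathbb{Z}[\mathbf{x}_n,\mathbf{y}_d]^{\mathfrak{S}_d}$, then $d!\cdot f$ lies in the ideal of $\mathbb{Z}[\mathbf{x}_n,\mathbf{y}_d]^{\mathfrak{S}_d}$ generated by $G$.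
   Context: $\mathbf{x}_n=(x_1,\dots,x_n)$, $\mathbf{y}_d=(y_1,\dots,y_d)$; $\mathfrak{S}_d$ acts by permuting the $y$-variables. $e_r,h_r$ are elementary and complete homogeneous symmetric polynomials ($e_0=h_0=1$, $e_r=0$ when $r$ exceeds the number of variables). *)

theory Defs
  imports "HOL-Library.Poly_Mapping" "HOL-Combinatorics.Permutations"
begin

text \<open>Polynomials in Z[x_0..x_(n-1), y_0..y_(d-1)]: variables are Inl i (x-variables)
  and Inr j (y-variables); monomials are finitely supported exponent maps.\<close>
type_synonym var = "nat + nat"
type_synonym mpoly = "(var \<Rightarrow>\<^sub>0 nat) \<Rightarrow>\<^sub>0 int"

definition Var :: "var \<Rightarrow> mpoly" where
  "Var v = Poly_Mapping.single (Poly_Mapping.single v 1) 1"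

definition psubst :: "(var \<Rightarrow> mpoly) \<Rightarrow> mpoly \<Rightarrow> mpoly" where
  "psubst f p = (\<Sum>mon\<in>Poly_Mapping.keys p. of_int (Poly_Mapping.lookup p mon) * (\<Prod>x\<in>Poly_Mapping.keys mon. f x ^ Poly_Mapping.lookup mon x))"

definition esym :: "nat \<Rightarrow> var set \<Rightarrow> mpoly" where
  "esym r S = (\<Sum>T\<in>{T. T \<subseteq> S \<and> card T = r}. \<Prod>v\<in>T. Var v)"

definition hsym :: "nat \<Rightarrow> var set \<Rightarrow> mpoly" where
  "hsym r S = (\<Sum>m\<in>{m :: var \<Rightarrow>\<^sub>0 nat. Poly_Mapping.keys m \<subseteq> S \<and> (\<Sum>v\<in>Poly_Mapping.keys m. Poly_Mapping.lookup m v) = r}.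
                  Poly_Mapping.single m 1)"

definition xvars :: "nat \<Rightarrow> var set" where "xvars n = Inl ` {..<n}"
definition yvars :: "nat \<Rightarrow> var set" where "yvars d = Inr ` {..<d}"

definition in_ring :: "nat \<Rightarrow> nat \<Rightarrow> mpoly \<Rightarrow> bool" where
  "in_ring n d p \<longleftrightarrow> (\<forall>m\<in>Poly_Mapping.keys p. Poly_Mapping.keys m \<subseteq> xvars n \<union> yvars d)"

definition act :: "(nat \<Rightarrow> nat) \<Rightarrow> mpoly \<Rightarrow> mpoly" where
  "act \<sigma> p = psubst (\<lambda>v. case v of Inl i \<Rightarrow> Var (Inl i) | Inr j \<Rightarrow> Var (Inr (\<sigma> j))) p"

definition y_symmetric :: "nat \<Rightarrow> mpoly \<Rightarrow> bool" where
  "y_symmetric d p \<longleftrightarrow> (\<forall>\<sigma>. \<sigma> permutes {..<d} \<longrightarrow> act \<sigma> p = p)"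

definition Gset :: "nat \<Rightarrow> nat \<Rightarrow> nat \<Rightarrow> mpoly set" where
  "Gset n k d =
     {hsym r (yvars d) | r. r > k - d}
   \<union> {(\<Sum>i\<le>r. (-1)^i * esym (r - i) (xvars n) * hsym i (yvars d)) | r. r > n - d}
   \<union> {(\<Sum>j\<le>d. (-1)^j * Var (Inl i) ^ (d - j) * esym j (yvars d)) | i. i < n}"

text \<open>f lies in the ideal generated by G inside the subring {p. P p}
  (coefficients restricted to satisfy P).\<close>
definition in_ideal_gen :: "(mpoly \<Rightarrow> bool) \<Rightarrow> mpoly set \<Rightarrow> mpoly \<Rightarrow> bool" where
  "in_ideal_gen P G f \<longleftrightarrow>
     (\<exists>S c. finite S \<and> S \<subseteq> G \<and> (\<forall>g\<in>S. P (c g)) \<and> f = (\<Sum>g\<in>S. c g * g))"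

end

theory Submission
  imports Defs
begin

definition monv :: "(var \<Rightarrow> mpoly) \<Rightarrow> (var \<Rightarrow>\<^sub>0 nat) \<Rightarrow> mpoly" where
  "monv f m = (\<Prod>x\<in>Poly_Mapping.keys m. f x ^ Poly_Mapping.lookup m x)"

lemma monv_superset:
  assumes "finite K" "Poly_Mapping.keys m \<subseteq> K"
  shows "monv f m = (\<Prod>x\<in>K. f x ^ Poly_Mapping.lookup m x)"
  unfolding monv_def
  by (rule prod.mono_neutral_left) (use assms in \<open>auto simp: in_keys_iff\<close>)

lemma monv_add: "monv f (a + b) = monv f a * monv f b"
proof -
  let ?K = "Poly_Mapping.keys a \<union> Poly_Mapping.keys b"
  have "monv f (a + b) = (\<Prod>x\<in>?K. f x ^ Poly_Mapping.lookup (a+b) x)"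
    by (rule monv_superset) (auto dest: keys_add[THEN subsetD])
  also have "\<dots> = (\<Prod>x\<in>?K. f x ^ Poly_Mapping.lookup a x) * (\<Prod>x\<in>?K. f x ^ Poly_Mapping.lookup b x)"
    by (simp add: lookup_add power_add prod.distrib)
  also have "\<dots> = monv f a * monv f b"
    by (simp add: monv_superset[of ?K a f] monv_superset[of ?K b f])
  finally show ?thesis .
qed

lemma monv_0 [simp]: "monv f 0 = 1"
  by (simp add: monv_def)

lemma psubst_alt: "psubst f p = (\<Sum>mon\<in>Poly_Mapping.keys p. of_int (Poly_Mapping.lookup p mon) * monv f mon)"
  by (simp add: psubst_def monv_def)

lemma psubst_superset:
  assumes "finite K" "Poly_Mapping.keys p \<subseteq> K"
  shows "psubst f p = (\<Sum>mon\<in>K. of_int (Poly_Mapping.lookup p mon) * monv f mon)"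
  unfolding psubst_alt
  by (rule sum.mono_neutral_left) (use assms in \<open>auto simp: in_keys_iff\<close>)

lemma psubst_add: "psubst f (p + q) = psubst f p + psubst f q"
proof -
  let ?K = "Poly_Mapping.keys p \<union> Poly_Mapping.keys q"
  have "psubst f (p + q) = (\<Sum>mon\<in>?K. of_int (Poly_Mapping.lookup (p+q) mon) * monv f mon)"
    by (rule psubst_superset) (auto dest: keys_add[THEN subsetD])
  also have "\<dots> = (\<Sum>mon\<in>?K. of_int (Poly_Mapping.lookup p mon) * monv f mon) + (\<Sum>mon\<in>?K. of_int (Poly_Mapping.lookup q mon) * monv f mon)"
    by (simp add: lookup_add distrib_right sum.distrib)
  also have "\<dots> = psubst f p + psubst f q"
    by (simp add: psubst_superset[of ?K p f] psubst_superset[of ?K q f])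
  finally show ?thesis .
qed

lemma psubst_0 [simp]: "psubst f 0 = 0"
  by (simp add: psubst_def)

lemma psubst_single: "psubst f (Poly_Mapping.single m c) = of_int c * monv f m"
  by (simp add: psubst_alt)

lemma psubst_sum: "psubst f (sum g A) = (\<Sum>a\<in>A. psubst f (g a))"
  by (induction A rule: infinite_finite_induct) (auto simp: psubst_add)

lemma pm_expand: "p = (\<Sum>a\<in>Poly_Mapping.keys p. Poly_Mapping.single a (Poly_Mapping.lookup p a))"
proof (rule poly_mapping_eqI)
  fix k
  show "Poly_Mapping.lookup p k = Poly_Mapping.lookup (\<Sum>a\<in>Poly_Mapping.keys p. Poly_Mapping.single a (Poly_Mapping.lookup p a)) k"
    by (simp add: lookup_sum lookup_single when_def in_keys_iff)
qed

lemma psubst_mult: "psubst f (p * q) = psubst f p * psubst f q"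
proof -
  let ?P = "Poly_Mapping.keys p" and ?Q = "Poly_Mapping.keys q"
  have "p * q = (\<Sum>a\<in>?P. Poly_Mapping.single a (Poly_Mapping.lookup p a)) * (\<Sum>b\<in>?Q. Poly_Mapping.single b (Poly_Mapping.lookup q b))"
    by (subst pm_expand[of p], subst pm_expand[of q]) (rule refl)
  also have "\<dots> = (\<Sum>a\<in>?P. \<Sum>b\<in>?Q. Poly_Mapping.single (a+b) (Poly_Mapping.lookup p a * Poly_Mapping.lookup q b))"
    by (simp add: sum_distrib_left sum_distrib_right mult_single) (rule sum.swap)
  finally have "psubst f (p * q) = (\<Sum>a\<in>?P. \<Sum>b\<in>?Q. of_int (Poly_Mapping.lookup p a) * monv f a * (of_int (Poly_Mapping.lookup q b) * monv f b))"
    by (simp add: psubst_sum psubst_single monv_add mult_ac)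
  also have "\<dots> = psubst f p * psubst f q"
    by (simp add: psubst_alt sum_distrib_left sum_distrib_right) (rule sum.swap)
  finally show ?thesis .
qed

lemma psubst_1 [simp]: "psubst f 1 = 1"
  using psubst_single[of f 0 1] by simp

lemma psubst_uminus: "psubst f (- p) = - psubst f p"
  using psubst_add[of f p "-p"] by (simp add: eq_neg_iff_add_eq_0 add.commute)

lemma psubst_of_int [simp]: "psubst f (of_int c) = of_int c"
proof -
  have "Poly_Mapping.single 0 c = (of_int c :: mpoly)"
    using single_of_int[where k=c and 'b=int] by simp
  then show ?thesis using psubst_single[of f 0 c] by simp
qed

lemma psubst_power: "psubst f (p ^ n) = psubst f p ^ n"
  by (induction n) (simp_all add: psubst_mult)

lemma psubst_prod: "psubst f (prod g A) = (\<Prod>a\<in>A. psubst f (g a))"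
  by (induction A rule: infinite_finite_induct) (auto simp: psubst_mult)

lemma psubst_Var [simp]: "psubst f (Var v) = f v"
  by (simp add: Var_def psubst_single monv_def)


lemma psubst_psubst: "psubst g (psubst f p) = psubst (\<lambda>v. psubst g (f v)) p"
  by (simp add: psubst_alt[of f] psubst_alt[of "\<lambda>v. psubst g (f v)"] psubst_sum psubst_mult
      psubst_prod psubst_power monv_def)

lemma Var_power: "Var x ^ e = Poly_Mapping.single (Poly_Mapping.single x e) 1"
  by (induction e) (simp_all add: Var_def mult_single single_add[symmetric] add.commute)

lemma prod_single1: "(\<Prod>x\<in>A. Poly_Mapping.single (g x) (1::int)) = Poly_Mapping.single (\<Sum>x\<in>A. g x) 1"
  by (induction A rule: infinite_finite_induct) (simp_all add: mult_single)

lemma single_monv: "Poly_Mapping.single m 1 = monv Var m"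
  unfolding monv_def Var_power prod_single1
  by (subst pm_expand[of m]) (rule refl)

lemma lookup_map_key: "inj f \<Longrightarrow> Poly_Mapping.lookup (Poly_Mapping.map_key f p) x = Poly_Mapping.lookup p (f x)"
  by (simp add: map_key.rep_eq)


lemma keys_ren: "bij \<rho> \<Longrightarrow> Poly_Mapping.keys (Poly_Mapping.map_key (inv \<rho>) m) = \<rho> ` Poly_Mapping.keys m"
  by (simp add: keys_map_key bij_is_inj bij_imp_bij_inv bij_vimage_eq_inv_image inv_inv_eq)

lemma lookup_ren: "bij \<rho> \<Longrightarrow> Poly_Mapping.lookup (Poly_Mapping.map_key (inv \<rho>) m) (\<rho> x) = Poly_Mapping.lookup m x"
  by (simp add: lookup_map_key bij_is_inj bij_imp_bij_inv inv_f_f)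

lemma lookup_ren': "bij \<rho> \<Longrightarrow> Poly_Mapping.lookup (Poly_Mapping.map_key (inv \<rho>) m) y = Poly_Mapping.lookup m (inv \<rho> y)"
  by (simp add: lookup_map_key bij_is_inj bij_imp_bij_inv)

lemma ren_inj: "bij \<rho> \<Longrightarrow> inj (Poly_Mapping.map_key (inv \<rho>) :: (var \<Rightarrow>\<^sub>0 nat) \<Rightarrow> _)"
proof (rule injI)
  fix a b :: "var \<Rightarrow>\<^sub>0 nat"
  assume b: "bij \<rho>" and e: "Poly_Mapping.map_key (inv \<rho>) a = Poly_Mapping.map_key (inv \<rho>) b"
  show "a = b"
  proof (rule poly_mapping_eqI)
    fix x
    have "Poly_Mapping.lookup (Poly_Mapping.map_key (inv \<rho>) a) (\<rho> x) = Poly_Mapping.lookup (Poly_Mapping.map_key (inv \<rho>) b) (\<rho> x)"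
      using e by simp
    then show "Poly_Mapping.lookup a x = Poly_Mapping.lookup b x" using b by (simp add: lookup_ren)
  qed
qed

lemma ren_back: "bij \<rho> \<Longrightarrow> Poly_Mapping.map_key (inv \<rho>) (Poly_Mapping.map_key \<rho> m) = m"
  by (rule poly_mapping_eqI) (simp add: lookup_ren' lookup_map_key bij_is_inj surj_f_inv_f[OF bij_is_surj])

lemma psubst_single_ren:
  assumes b: "bij \<rho>"
  shows "psubst (\<lambda>v. Var (\<rho> v)) (Poly_Mapping.single m 1) = Poly_Mapping.single (Poly_Mapping.map_key (inv \<rho>) m) 1"
proof -
  let ?m = "Poly_Mapping.map_key (inv \<rho>) m"
  have "Poly_Mapping.single ?m 1 = (\<Prod>y\<in>\<rho> ` Poly_Mapping.keys m. Var y ^ Poly_Mapping.lookup ?m y)"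
    by (simp add: single_monv monv_def keys_ren b)
  also have "\<dots> = (\<Prod>x\<in>Poly_Mapping.keys m. Var (\<rho> x) ^ Poly_Mapping.lookup m x)"
    by (subst prod.reindex[OF inj_on_subset[OF bij_is_inj[OF b] subset_UNIV]]) (simp add: lookup_ren b)
  finally show ?thesis by (simp add: psubst_single monv_def)
qed

lemma deg_ren: "bij \<rho> \<Longrightarrow> (\<Sum>v\<in>Poly_Mapping.keys (Poly_Mapping.map_key (inv \<rho>) m). Poly_Mapping.lookup (Poly_Mapping.map_key (inv \<rho>) m) v)
   = (\<Sum>v\<in>Poly_Mapping.keys m. Poly_Mapping.lookup m v)"
  by (simp add: keys_ren sum.reindex[OF inj_on_subset[OF bij_is_inj subset_UNIV]] lookup_ren)

lemma psubst_hsym: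
  assumes b: "bij \<rho>"
  shows "psubst (\<lambda>v. Var (\<rho> v)) (hsym r S) = hsym r (\<rho> ` S)"
proof -
  define H where "H S = {m :: var \<Rightarrow>\<^sub>0 nat. Poly_Mapping.keys m \<subseteq> S \<and> (\<Sum>v\<in>Poly_Mapping.keys m. Poly_Mapping.lookup m v) = r}" for S
  let ?rn = "Poly_Mapping.map_key (inv \<rho>) :: (var \<Rightarrow>\<^sub>0 nat) \<Rightarrow> _"
  have img: "?rn ` H S = H (\<rho> ` S)"
  proof
    show "?rn ` H S \<subseteq> H (\<rho> ` S)"
    proof
      fix m' assume "m' \<in> ?rn ` H S"
      then obtain m where m: "m \<in> H S" and e: "m' = ?rn m" by blast
      have k: "Poly_Mapping.keys (?rn m) = \<rho> ` Poly_Mapping.keys m" using b by (rule keys_ren)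
      have "Poly_Mapping.keys (?rn m) \<subseteq> \<rho> ` S" using m unfolding k H_def by auto
      moreover have "(\<Sum>v\<in>Poly_Mapping.keys (?rn m). Poly_Mapping.lookup (?rn m) v) = r"
        using deg_ren[OF b, of m] m unfolding H_def by simp
      ultimately show "m' \<in> H (\<rho> ` S)" unfolding H_def e by simp
    qed
  next
    show "H (\<rho> ` S) \<subseteq> ?rn ` H S"
    proof
      fix m' assume m': "m' \<in> H (\<rho> ` S)"
      let ?m = "Poly_Mapping.map_key \<rho> m'"
      have e: "?rn ?m = m'" using b by (rule ren_back)
      have "?m \<in> H S"
        using m' b deg_ren[OF b, of ?m] unfolding H_def e
        by (auto simp: keys_map_key bij_is_inj) (metis bij_is_inj inj_image_mem_iff subsetD)
      then show "m' \<in> ?rn ` H S" using e by (metis image_eqI)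
    qed
  qed
  have "psubst (\<lambda>v. Var (\<rho> v)) (hsym r S) = (\<Sum>m\<in>H S. Poly_Mapping.single (?rn m) 1)"
    by (simp add: hsym_def H_def psubst_sum psubst_single_ren b)
  also have "\<dots> = (\<Sum>m'\<in>?rn ` H S. Poly_Mapping.single m' 1)"
    by (subst sum.reindex) (auto intro: inj_on_subset ren_inj b)
  also have "\<dots> = hsym r (\<rho> ` S)"
    unfolding img by (simp add: hsym_def H_def)
  finally show ?thesis .
qed

lemma psubst_esym:
  assumes i: "inj \<rho>"
  shows "psubst (\<lambda>v. Var (\<rho> v)) (esym r S) = esym r (\<rho> ` S)"
proof -
  define F where "F S = {T. T \<subseteq> S \<and> card T = r}" for S :: "var set"
  have img: "image \<rho> ` F S = F (\<rho> ` S)"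
  proof
    show "image \<rho> ` F S \<subseteq> F (\<rho> ` S)"
      by (auto simp: F_def card_image[OF inj_on_subset[OF i subset_UNIV]])
  next
    show "F (\<rho> ` S) \<subseteq> image \<rho> ` F S"
    proof
      fix T assume T: "T \<in> F (\<rho> ` S)"
      let ?T = "{v\<in>S. \<rho> v \<in> T}"
      have e: "\<rho> ` ?T = T" using T unfolding F_def by blast
      have "card ?T = card T" using card_image[OF inj_on_subset[OF i subset_UNIV], of ?T] e by simp
      then have "?T \<in> F S" using T by (simp add: F_def)
      then show "T \<in> image \<rho> ` F S" by (rule image_eqI[where f="image \<rho>", OF e[symmetric]])
    qed
  qed
  have "psubst (\<lambda>v. Var (\<rho> v)) (esym r S) = (\<Sum>T\<in>F S. \<Prod>v\<in>T. Var (\<rho> v))"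
    by (simp add: esym_def F_def psubst_sum psubst_prod)
  also have "\<dots> = (\<Sum>T\<in>F S. \<Prod>w\<in>\<rho> ` T. Var w)"
    by (rule sum.cong[OF refl]) (simp add: prod.reindex[OF inj_on_subset[OF i subset_UNIV]])
  also have "\<dots> = (\<Sum>T'\<in>image \<rho> ` F S. \<Prod>w\<in>T'. Var w)"
    by (subst sum.reindex[OF inj_on_image[OF inj_on_subset[OF i subset_UNIV]]]) simp
  also have "\<dots> = esym r (\<rho> ` S)"
    unfolding img by (simp add: esym_def F_def)
  finally show ?thesis .
qed


definition inr :: "var set \<Rightarrow> mpoly \<Rightarrow> bool" where
  "inr V p \<longleftrightarrow> (\<forall>m\<in>Poly_Mapping.keys p. Poly_Mapping.keys m \<subseteq> V)"

lemma in_ring_inr: "in_ring n d = inr (xvars n \<union> yvars d)"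
  by (simp add: fun_eq_iff in_ring_def inr_def)

lemma inr_add: "inr V p \<Longrightarrow> inr V q \<Longrightarrow> inr V (p + q)"
  unfolding inr_def
proof (intro ballI)
  fix m assume p: "\<forall>m\<in>Poly_Mapping.keys p. Poly_Mapping.keys m \<subseteq> V"
    and q: "\<forall>m\<in>Poly_Mapping.keys q. Poly_Mapping.keys m \<subseteq> V"
    and m: "m \<in> Poly_Mapping.keys (p + q)"
  have "m \<in> Poly_Mapping.keys p \<union> Poly_Mapping.keys q" using m keys_add[of p q] by (rule subsetD[rotated])
  then show "Poly_Mapping.keys m \<subseteq> V" using p q by (elim UnE) simp_all
qed

lemma inr_mult: "inr V p \<Longrightarrow> inr V q \<Longrightarrow> inr V (p * q)"
  unfolding inr_def
proof (intro ballI)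
  fix m assume p: "\<forall>m\<in>Poly_Mapping.keys p. Poly_Mapping.keys m \<subseteq> V"
    and q: "\<forall>m\<in>Poly_Mapping.keys q. Poly_Mapping.keys m \<subseteq> V"
    and m: "m \<in> Poly_Mapping.keys (p * q)"
  have "m \<in> {a + b | a b. a \<in> Poly_Mapping.keys p \<and> b \<in> Poly_Mapping.keys q}"
    using m keys_mult[of p q] by (rule subsetD[rotated])
  then obtain a b where ab: "m = a + b" "a \<in> Poly_Mapping.keys p" "b \<in> Poly_Mapping.keys q" by blast
  have "Poly_Mapping.keys m \<subseteq> Poly_Mapping.keys a \<union> Poly_Mapping.keys b"
    unfolding ab(1) by (rule keys_add)
  also have "\<dots> \<subseteq> V" using p q ab(2,3) by blast
  finally show "Poly_Mapping.keys m \<subseteq> V" .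
qed

lemma inr_of_int: "inr V (of_int c)"
proof -
  have "Poly_Mapping.single 0 c = (of_int c :: mpoly)"
    using single_of_int[where k=c and 'b=int] by simp
  then have "(of_int c :: mpoly) = Poly_Mapping.single 0 c" by (rule sym)
  then show ?thesis unfolding inr_def by simp
qed

lemma inr_1: "inr V 1"
  using inr_of_int[of V 1] by simp

lemma inr_0: "inr V 0"
  unfolding inr_def by simp

lemma inr_sum: "(\<And>a. a \<in> A \<Longrightarrow> inr V (g a)) \<Longrightarrow> inr V (sum g A)"
  by (induction A rule: infinite_finite_induct) (auto intro: inr_add inr_0)

lemma inr_prod: "(\<And>a. a \<in> A \<Longrightarrow> inr V (g a)) \<Longrightarrow> inr V (prod g A)"
  by (induction A rule: infinite_finite_induct) (auto intro: inr_mult inr_1)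

lemma inr_power: "inr V p \<Longrightarrow> inr V (p ^ k)"
  by (induction k) (auto intro: inr_mult inr_1)

lemma inr_Var: "v \<in> V \<Longrightarrow> inr V (Var v)"
  unfolding inr_def Var_def by simp

lemma inr_psubst:
  assumes "inr V p" "\<And>v. v \<in> V \<Longrightarrow> inr W (f v)"
  shows "inr W (psubst f p)"
  unfolding psubst_alt monv_def
proof (intro inr_sum inr_mult inr_of_int inr_prod inr_power)
  fix mon x assume "mon \<in> Poly_Mapping.keys p" "x \<in> Poly_Mapping.keys mon"
  then have "x \<in> V" using assms(1) unfolding inr_def by blast
  then show "inr W (f x)" by (rule assms(2))
qed

lemma act_eq: "act \<sigma> p = psubst (\<lambda>v. Var (map_sum id \<sigma> v)) p"
proof -
  have "(\<lambda>v. case v of Inl i \<Rightarrow> Var (Inl i) | Inr j \<Rightarrow> Var (Inr (\<sigma> j))) = (\<lambda>v. Var (map_sum id \<sigma> v))"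
    by (auto simp: fun_eq_iff split: sum.split)
  then show ?thesis by (simp add: act_def)
qed

lemma act_comp: "act \<tau> (act \<sigma> p) = act (\<tau> \<circ> \<sigma>) p"
  unfolding act_eq psubst_psubst psubst_Var
  by (rule arg_cong[where f="\<lambda>f. psubst f p"]) (simp add: fun_eq_iff map_sum.compositionality)

lemma bij_ms: "bij \<sigma> \<Longrightarrow> bij (map_sum id \<sigma>)"
proof (rule o_bij)
  assume b: "bij \<sigma>"
  have 1: "inv \<sigma> \<circ> \<sigma> = id" using b by (simp add: bij_is_inj)
  have 2: "\<sigma> \<circ> inv \<sigma> = id" using surj_iff[THEN iffD1, OF bij_is_surj[OF b]] .

  show "map_sum id (inv \<sigma>) \<circ> map_sum id \<sigma> = id"
    by (simp add: map_sum.comp 1 map_sum.id)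
  show "map_sum id \<sigma> \<circ> map_sum id (inv \<sigma>) = id"
    by (simp add: map_sum.comp 2 map_sum.id)
qed

lemma ms_x: "map_sum id \<sigma> ` xvars n = xvars n"
  by (simp add: xvars_def image_image)

lemma ms_y: "\<sigma> permutes {..<d} \<Longrightarrow> map_sum id \<sigma> ` yvars d = yvars d"
proof -
  assume p: "\<sigma> permutes {..<d}"
  have "map_sum id \<sigma> ` yvars d = Inr ` (\<sigma> ` {..<d})" by (simp add: yvars_def image_image)
  also have "\<dots> = yvars d" using permutes_image[OF p] by (simp add: yvars_def)
  finally show ?thesis .
qed

lemma act_sum: "act \<sigma> (sum g A) = (\<Sum>a\<in>A. act \<sigma> (g a))"
  by (simp add: act_eq psubst_sum)

lemma act_mult: "act \<sigma> (p * q) = act \<sigma> p * act \<sigma> q"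
  by (simp add: act_eq psubst_mult)

lemma act_power: "act \<sigma> (p ^ m) = act \<sigma> p ^ m"
  by (simp add: act_eq psubst_power)

lemma act_m1: "act \<sigma> ((-1) ^ m) = (-1) ^ m"
  by (simp add: act_eq psubst_power psubst_uminus)

lemma act_neg1: "act \<sigma> (-1) = -1"
  by (simp add: act_eq psubst_uminus)

lemma act_VarL: "act \<sigma> (Var (Inl i)) = Var (Inl i)"
  by (simp add: act_eq)

lemma act_Gset:
  assumes p: "\<sigma> permutes {..<d}" and g: "g \<in> Gset n k d"
  shows "act \<sigma> g = g"
proof -
  have b: "bij (map_sum id \<sigma>)" using p by (intro bij_ms permutes_bij)
  have i: "inj (map_sum id \<sigma>)" using b by (rule bij_is_inj)
  have H: "act \<sigma> (hsym r (yvars d)) = hsym r (yvars d)" for r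
    unfolding act_eq psubst_hsym[OF b] ms_y[OF p] ..
  have EY: "act \<sigma> (esym r (yvars d)) = esym r (yvars d)" for r
    unfolding act_eq psubst_esym[OF i] ms_y[OF p] ..
  have EX: "act \<sigma> (esym r (xvars n)) = esym r (xvars n)" for r
    unfolding act_eq psubst_esym[OF i] ms_x ..
  from g consider (a) r where "g = hsym r (yvars d)"
    | (b) r where "g = (\<Sum>i\<le>r. (-1)^i * esym (r - i) (xvars n) * hsym i (yvars d))"
    | (c) i where "g = (\<Sum>j\<le>d. (-1)^j * Var (Inl i) ^ (d - j) * esym j (yvars d))"
    unfolding Gset_def by blast
  then show ?thesis
  proof cases
    case a then show ?thesis by (simp only: H)
  next
    case b then show ?thesis by (simp only: act_sum act_mult act_m1 act_power act_neg1 EX H)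
  next
    case c then show ?thesis by (simp only: act_sum act_mult act_m1 act_power act_neg1 act_VarL EY)
  qed
qed

lemma act_inr:
  assumes p: "\<sigma> permutes {..<d}" and c: "in_ring n d c"
  shows "in_ring n d (act \<sigma> c)"
proof -
  have *: "map_sum id \<sigma> v \<in> xvars n \<union> yvars d" if "v \<in> xvars n \<union> yvars d" for v
  proof -
    have "map_sum id \<sigma> v \<in> map_sum id \<sigma> ` (xvars n \<union> yvars d)" using that by (rule imageI)
    then show ?thesis by (simp only: image_Un ms_x ms_y[OF p])
  qed
  show ?thesis unfolding in_ring_inr act_eq
  proof (rule inr_psubst[OF c[unfolded in_ring_inr]])
    fix v assume "v \<in> xvars n \<union> yvars d"
    then show "inr (xvars n \<union> yvars d) (Var (map_sum id \<sigma> v))" by (intro inr_Var *)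
  qed
qed


theorem lemma4p10:
  fixes n k d :: nat and f :: mpoly
  assumes "1 \<le> d" and "d \<le> k" and "k \<le> n"
    and "in_ring n d f"
    and "in_ideal_gen (in_ring n d) (Gset n k d) f"
    and "y_symmetric d f"
  shows "in_ideal_gen (\<lambda>c. in_ring n d c \<and> y_symmetric d c) (Gset n k d) (of_nat (fact d) * f)"
proof -
  obtain S c where fin: "finite S" and sub: "S \<subseteq> Gset n k d"
    and cr: "\<forall>g\<in>S. in_ring n d (c g)" and fe: "f = (\<Sum>g\<in>S. c g * g)"
    using assms(5) unfolding in_ideal_gen_def by blast
  define P where "P = {\<sigma>. \<sigma> permutes {..<d::nat}}"
  define c' where "c' g = (\<Sum>\<sigma>\<in>P. act \<sigma> (c g))" for g
  have "of_nat (fact d) * f = (\<Sum>\<sigma>\<in>P. f)"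
    by (simp add: P_def card_permutations)
  also have "\<dots> = (\<Sum>\<sigma>\<in>P. act \<sigma> f)"
    using assms(6) by (simp add: P_def y_symmetric_def)
  also have "\<dots> = (\<Sum>\<sigma>\<in>P. \<Sum>g\<in>S. act \<sigma> (c g) * g)"
  proof (rule sum.cong[OF refl])
    fix \<sigma> assume s: "\<sigma> \<in> P"
    show "act \<sigma> f = (\<Sum>g\<in>S. act \<sigma> (c g) * g)"
      unfolding fe act_sum act_mult
    proof (rule sum.cong[OF refl])
      fix g assume "g \<in> S"
      then have "g \<in> Gset n k d" using sub by blast
      then have "act \<sigma> g = g" using s unfolding P_def by (intro act_Gset) simp_all
      then show "act \<sigma> (c g) * act \<sigma> g = act \<sigma> (c g) * g" by simp
    qed
  qed
  also have "\<dots> = (\<Sum>g\<in>S. c' g * g)"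
    unfolding c'_def sum_distrib_right by (rule sum.swap)
  finally have eq: "of_nat (fact d) * f = (\<Sum>g\<in>S. c' g * g)" .
  have ring: "in_ring n d (c' g)" if "g \<in> S" for g
    unfolding c'_def in_ring_inr
  proof (rule inr_sum)
    fix \<sigma> assume "\<sigma> \<in> P"
    then have "\<sigma> permutes {..<d}" by (simp add: P_def)
    moreover have "in_ring n d (c g)" using cr that by blast
    ultimately show "inr (xvars n \<union> yvars d) (act \<sigma> (c g))"
      using act_inr[of \<sigma> d n "c g"] unfolding in_ring_inr by blast
  qed
  have sym: "y_symmetric d (c' g)" for g
    unfolding y_symmetric_def
  proof (intro allI impI)
    fix \<tau> :: "nat \<Rightarrow> nat" assume t: "\<tau> permutes {..<d}"
    have "act \<tau> (c' g) = (\<Sum>\<sigma>\<in>P. act (\<tau> \<circ> \<sigma>) (c g))"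
      by (simp add: c'_def act_sum act_comp)
    also have "\<dots> = c' g"
      unfolding c'_def P_def by (rule setum_permutations_compose_left[OF t, symmetric])
    finally show "act \<tau> (c' g) = c' g" .
  qed
  show ?thesis
    unfolding in_ideal_gen_def
    by (rule exI[where x=S], rule exI[where x=c']) (use fin sub ring sym eq in blast)
qed

end
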